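(* For every Turing degree $\boldsymbol{d}$, there exist equivalence relations $E$ and $F$ on $\omega$ such that $E$ is finitarily reducible to $F$ via a computable function, but there is no $\boldsymbol{d}$-computable reduction from $E$ to $F$.
   Context: For equivalence relations $E,F$ on $\omega$, a reduction from $E$ to $F$ is a function $g:\omega\to\omega$ with $x\,E\,y\iff g(x)\,F\,g(y)$ for all $x,y$; it is $\boldsymbol{d}$-computable if computable from a set of degree $\boldsymbol{d}$. $E$ is finitarily reducible to $F$ if there is one total computable function which, given $n\ge1$ and an $n$-tuple $(x_0,\dots,x_{n-1})\in\omega^n$, outputs an $n$-tuple $(y_0,\dots,y_{n-1})$ with $x_i\,E\,x_j\iff y_i\,F\,y_j$ for all $i<j<n$. *)

theory Defs
  imports Main "HOL-Library.Nat_Bijection"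
begin

text \<open>Codes for partial recursive functions relative to an oracle set.
  Functions act on argument lists (of varying arity).\<close>

datatype recf =
    Zero
  | Succ
  | Proj nat
  | Comp recf "recf list"
  | Prim recf recf
  | Mn recf
  | Orc

inductive eval :: "nat set \<Rightarrow> recf \<Rightarrow> nat list \<Rightarrow> nat \<Rightarrow> bool" for A where
  ev_zero: "eval A Zero xs 0"
| ev_succ: "eval A Succ (x # xs) (Suc x)"
| ev_proj: "i < length xs \<Longrightarrow> eval A (Proj i) xs (xs ! i)"
| ev_comp: "list_all2 (\<lambda>g z. eval A g xs z) gs zs \<Longrightarrow> eval A f zs y \<Longrightarrow> eval A (Comp f gs) xs y"
| ev_prim0: "eval A f xs y \<Longrightarrow> eval A (Prim f g) (0 # xs) y"
| ev_primS: "eval A (Prim f g) (n # xs) z \<Longrightarrow> eval A g (n # z # xs) y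
             \<Longrightarrow> eval A (Prim f g) (Suc n # xs) y"
| ev_mn: "eval A f (y # xs) 0 \<Longrightarrow> (\<forall>z<y. \<exists>w. eval A f (z # xs) w \<and> w \<noteq> 0)
          \<Longrightarrow> eval A (Mn f) xs y"
| ev_orc: "eval A Orc (x # xs) (if x \<in> A then 1 else 0)"

definition computable_in :: "nat set \<Rightarrow> (nat \<Rightarrow> nat) \<Rightarrow> bool" where
  "computable_in A g \<longleftrightarrow> (\<exists>c. \<forall>x. eval A c [x] (g x))"

definition computable :: "(nat \<Rightarrow> nat) \<Rightarrow> bool" where
  "computable g \<longleftrightarrow> computable_in {} g"

definition is_reduction :: "(nat \<times> nat) set \<Rightarrow> (nat \<times> nat) set \<Rightarrow> (nat \<Rightarrow> nat) \<Rightarrow> bool" where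
  "is_reduction E F g \<longleftrightarrow> (\<forall>x y. (x, y) \<in> E \<longleftrightarrow> (g x, g y) \<in> F)"

definition finitarily_reducible :: "(nat \<times> nat) set \<Rightarrow> (nat \<times> nat) set \<Rightarrow> bool" where
  "finitarily_reducible E F \<longleftrightarrow>
     (\<exists>h. computable h \<and>
        (\<forall>xs. xs \<noteq> [] \<longrightarrow>
           (let ys = list_decode (h (list_encode xs)) in
              length ys = length xs \<and>
              (\<forall>i j. i < j \<and> j < length xs \<longrightarrow>
                 ((xs ! i, xs ! j) \<in> E \<longleftrightarrow> (ys ! i, ys ! j) \<in> F)))))"

end

theory Submission imports Defs "HOL-Library.Countable" "HOL-Library.Infinite_Set" begin

lemma inv_zero: "eval A Zero xs y \<Longrightarrow> y = 0" by (cases rule: eval.cases) auto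
lemma inv_succ: "eval A Succ xs y \<Longrightarrow> xs \<noteq> [] \<and> y = Suc (hd xs)" by (cases rule: eval.cases) auto
lemma inv_proj: "eval A (Proj i) xs y \<Longrightarrow> y = xs ! i" by (cases rule: eval.cases) auto
lemma inv_orc: "eval A Orc xs y \<Longrightarrow> y = (if hd xs \<in> A then 1 else 0)" by (cases rule: eval.cases) auto
lemma inv_comp: "eval A (Comp f gs) xs y \<Longrightarrow> \<exists>zs. list_all2 (\<lambda>g z. eval A g xs z) gs zs \<and> eval A f zs y"
  by (cases rule: eval.cases) auto
lemma inv_prim0: "eval A (Prim f g) (0 # xs) y \<Longrightarrow> eval A f xs y"
  by (cases rule: eval.cases) auto
lemma inv_primS: "eval A (Prim f g) (Suc n # xs) y \<Longrightarrow> \<exists>z. eval A (Prim f g) (n # xs) z \<and> eval A g (n # z # xs) y"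
  by (cases rule: eval.cases) auto
lemma inv_mn: "eval A (Mn f) xs y \<Longrightarrow> eval A f (y # xs) 0 \<and> (\<forall>z<y. \<exists>w. eval A f (z # xs) w \<and> w \<noteq> 0)"
  by (cases rule: eval.cases) auto

lemma eval_det_aux:
  "eval A c xs y \<Longrightarrow> \<forall>y'. eval A c xs y' \<longrightarrow> y = y'"
proof (induction rule: eval.induct)
  case (ev_comp xs gs zs f y)
  show ?case
  proof (intro allI impI)
    fix y' assume "eval A (Comp f gs) xs y'"
    then obtain zs' where z': "list_all2 (\<lambda>g z. eval A g xs z) gs zs'" "eval A f zs' y'"
      using inv_comp by blast
    have L: "list_all2 (\<lambda>g z. eval A g xs z \<and> (\<forall>y'. eval A g xs y' \<longrightarrow> z = y')) gs zs"
      using ev_comp(1) .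
    have "zs = zs'"
    proof (rule nth_equalityI)
      have l1: "length gs = length zs" using L by (rule list_all2_lengthD)
      have l2: "length gs = length zs'" using z'(1) by (rule list_all2_lengthD)
      show "length zs = length zs'" using l1 l2 by simp
      fix i assume i: "i < length zs"
      have "eval A (gs ! i) xs (zs ! i) \<and> (\<forall>y'. eval A (gs ! i) xs y' \<longrightarrow> zs ! i = y')"
        using list_all2_nthD[OF L] i l1 by simp
      moreover have "eval A (gs ! i) xs (zs' ! i)"
        using list_all2_nthD[OF z'(1)] i l1 l2 by simp
      ultimately show "zs ! i = zs' ! i" by simp
    qed
    then have "eval A f zs y'" using z'(2) by simp
    then show "y = y'" using ev_comp.IH(2) by simp
  qed
next
  case (ev_prim0 f xs y g)
  then show ?case using inv_prim0 by blast
next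
  case (ev_primS f g n xs z y)
  show ?case
  proof (intro allI impI)
    fix y' assume "eval A (Prim f g) (Suc n # xs) y'"
    then obtain z' where a: "eval A (Prim f g) (n # xs) z'" "eval A g (n # z' # xs) y'"
      using inv_primS by blast
    have "z = z'" using ev_primS.IH(1) a(1) by simp
    then show "y = y'" using ev_primS.IH(2) a(2) by simp
  qed
next
  case (ev_mn f y xs)
  show ?case
  proof (intro allI impI)
    fix y' assume "eval A (Mn f) xs y'"
    then have a: "eval A f (y' # xs) 0" "\<forall>z<y'. \<exists>w. eval A f (z # xs) w \<and> w \<noteq> 0"
      using inv_mn by blast+
    show "y = y'"
    proof (rule ccontr)
      assume "y \<noteq> y'"
      then consider "y < y'" | "y' < y" by arith
      then show False
      proof cases
        case 1
        then obtain w where "eval A f (y # xs) w" "w \<noteq> 0" using a(2) by blast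
        then show False using ev_mn.IH(1) by fastforce
      next
        case 2
        then obtain w where "eval A f (y' # xs) w" "w \<noteq> 0"
                        "\<forall>y''. eval A f (y' # xs) y'' \<longrightarrow> w = y''"
          using ev_mn.IH(2) by blast
        then show False using a(1) by fastforce
      qed
    qed
  qed
next
  case (ev_zero xs) then show ?case using inv_zero by blast
next
  case (ev_succ x xs) then show ?case using inv_succ by fastforce
next
  case (ev_proj i xs) then show ?case using inv_proj by blast
next
  case (ev_orc x xs) then show ?case using inv_orc by fastforce
qed

lemma eval_det: "eval A c xs y \<Longrightarrow> eval A c xs y' \<Longrightarrow> y = y'"
  using eval_det_aux by blast

instance recf :: countable by countable_datatype

definition rc :: "nat \<Rightarrow> (nat list \<Rightarrow> nat) \<Rightarrow> bool" where
  "rc k f \<longleftrightarrow> (\<exists>c. \<forall>xs. length xs = k \<longrightarrow> eval {} c xs (f xs))"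

lemma rc_cong: "rc k f \<Longrightarrow> (\<And>xs. length xs = k \<Longrightarrow> f xs = g xs) \<Longrightarrow> rc k g"
  unfolding rc_def by metis

lemma rc_proj: "i < k \<Longrightarrow> rc k (\<lambda>xs. xs ! i)"
  unfolding rc_def by (auto intro: ev_proj)

lemma rc_zero: "rc k (\<lambda>_. 0)"
  unfolding rc_def by (auto intro: ev_zero)

lemma rc_comp:
  assumes f: "rc m f" and g: "\<forall>i<m. rc k (gs i)"
  shows "rc k (\<lambda>xs. f (map (\<lambda>i. gs i xs) [0..<m]))"
proof -
  obtain cf where cf: "\<forall>xs. length xs = m \<longrightarrow> eval {} cf xs (f xs)" using f unfolding rc_def by blast
  from g have "\<forall>i. \<exists>c. i < m \<longrightarrow> (\<forall>xs. length xs = k \<longrightarrow> eval {} c xs (gs i xs))"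
    unfolding rc_def by blast
  then obtain C where C: "\<And>i xs. i < m \<Longrightarrow> length xs = k \<Longrightarrow> eval {} (C i) xs (gs i xs)"
    by metis
  show ?thesis unfolding rc_def
  proof (intro exI allI impI)
    fix xs :: "nat list" assume l: "length xs = k"
    show "eval {} (Comp cf (map C [0..<m])) xs (f (map (\<lambda>i. gs i xs) [0..<m]))"
    proof (rule ev_comp)
      show "list_all2 (\<lambda>g z. eval {} g xs z) (map C [0..<m]) (map (\<lambda>i. gs i xs) [0..<m])"
        by (simp add: list_all2_conv_all_nth C l)
      show "eval {} cf (map (\<lambda>i. gs i xs) [0..<m]) (f (map (\<lambda>i. gs i xs) [0..<m]))"
        using cf by simp
    qed
  qed
qed

lemma rc_comp1: "rc 1 f \<Longrightarrow> rc k a \<Longrightarrow> rc k (\<lambda>xs. f [a xs])"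
  using rc_comp[of 1 f k "\<lambda>i. a"] by simp

lemma rc_comp2: "rc 2 f \<Longrightarrow> rc k a \<Longrightarrow> rc k b \<Longrightarrow> rc k (\<lambda>xs. f [a xs, b xs])"
  using rc_comp[of 2 f k "\<lambda>i. if i = 0 then a else b"] by (simp add: upt_rec)

lemma rc_comp3: "rc 3 f \<Longrightarrow> rc k a \<Longrightarrow> rc k b \<Longrightarrow> rc k d \<Longrightarrow> rc k (\<lambda>xs. f [a xs, b xs, d xs])"
  using rc_comp[of 3 f k "\<lambda>i. if i = 0 then a else if i = 1 then b else d"] by (simp add: upt_rec)

declare upt_Suc[simp del]

lemma map_upt_Suc_nth: "length xs = Suc k \<Longrightarrow> map (\<lambda>i. xs ! Suc i) [0..<k] = tl xs"
  by (rule nth_equalityI) (auto simp: nth_tl)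

lemma rc_cons: "rc (Suc k) F \<Longrightarrow> rc k a \<Longrightarrow> rc k (\<lambda>xs. F (a xs # xs))"
proof -
  assume F: "rc (Suc k) F" and a: "rc k a"
  let ?gs = "\<lambda>i. if i = 0 then a else (\<lambda>xs. xs ! (i - 1))"
  have "\<forall>i<Suc k. rc k (?gs i)"
    using a rc_proj by simp
  from rc_comp[OF F this] have 1: "rc k (\<lambda>xs. F (map (\<lambda>i. ?gs i xs) [0..<Suc k]))" .
  have 2: "map (\<lambda>i. ?gs i xs) [0..<Suc k] = a xs # xs" if "length xs = k" for xs
  proof (rule nth_equalityI)
    show "length (map (\<lambda>i. ?gs i xs) [0..<Suc k]) = length (a xs # xs)" using that by simp
    fix i assume i: "i < length (map (\<lambda>i. ?gs i xs) [0..<Suc k])"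
    then have "map (\<lambda>i. ?gs i xs) [0..<Suc k] ! i = ?gs i xs"
      by (simp del: upt_Suc)
    then show "map (\<lambda>i. ?gs i xs) [0..<Suc k] ! i = (a xs # xs) ! i"
      by (cases i) auto
  qed
  show ?thesis by (rule rc_cong[OF 1]) (simp add: 2)
qed

lemma rc_suc: "rc k f \<Longrightarrow> rc k (\<lambda>xs. Suc (f xs))"
proof -
  assume "rc k f"
  have "rc 1 (\<lambda>xs. Suc (hd xs))" unfolding rc_def
    by (rule exI[of _ Succ]) (auto simp: length_Suc_conv intro: ev_succ)
  from rc_comp1[OF this \<open>rc k f\<close>] show ?thesis by simp
qed

lemma rc_const: "rc k (\<lambda>_. c)"
  by (induction c) (auto intro: rc_zero rc_suc[of k "\<lambda>_. _", simplified])

primrec PR :: "(nat list \<Rightarrow> nat) \<Rightarrow> (nat list \<Rightarrow> nat) \<Rightarrow> nat \<Rightarrow> nat list \<Rightarrow> nat" where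
  "PR f g 0 xs = f xs"
| "PR f g (Suc n) xs = g (n # PR f g n xs # xs)"

lemma rc_prim: "rc k f \<Longrightarrow> rc (Suc (Suc k)) g \<Longrightarrow> rc (Suc k) (\<lambda>ys. PR f g (hd ys) (tl ys))"
proof -
  assume "rc k f" "rc (Suc (Suc k)) g"
  then obtain cf cg where cf: "\<forall>xs. length xs = k \<longrightarrow> eval {} cf xs (f xs)"
    and cg: "\<forall>xs. length xs = Suc (Suc k) \<longrightarrow> eval {} cg xs (g xs)" unfolding rc_def by blast
  have *: "eval {} (Prim cf cg) (n # xs) (PR f g n xs)" if l: "length xs = k" for n xs
  proof (induction n)
    case 0
    show ?case using cf l by (simp add: ev_prim0)
  next
    case (Suc n)
    have "eval {} cg (n # PR f g n xs # xs) (g (n # PR f g n xs # xs))"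
      using cg l by simp
    then show ?case using ev_primS[OF Suc] by simp
  qed
  show ?thesis unfolding rc_def
  proof (intro exI allI impI)
    fix ys :: "nat list" assume "length ys = Suc k"
    then obtain y xs where "ys = y # xs" "length xs = k" by (cases ys) auto
    then show "eval {} (Prim cf cg) ys (PR f g (hd ys) (tl ys))" using * by simp
  qed
qed

lemma rc_iter:
  assumes st: "rc (Suc k) st" and n: "rc k n" and s0: "rc k s0"
  shows "rc k (\<lambda>xs. ((\<lambda>s. st (s # xs)) ^^ n xs) (s0 xs))"
proof -
  have "\<forall>i<Suc k. rc (Suc (Suc k)) (\<lambda>ys. ys ! Suc i)"
    by (intro allI impI rc_proj) simp
  from rc_comp[OF st this] have g0: "rc (Suc (Suc k)) (\<lambda>ys. st (map (\<lambda>i. ys ! Suc i) [0..<Suc k]))" .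
  have M: "map (\<lambda>i. ys ! Suc i) [0..<Suc k] = tl ys" if "length ys = Suc (Suc k)" for ys
    using that by (intro nth_equalityI) (simp_all add: nth_tl)
  have g: "rc (Suc (Suc k)) (\<lambda>ys. st (tl ys))"
    by (rule rc_cong[OF g0]) (metis M)
  have p: "rc (Suc k) (\<lambda>ys. PR s0 (\<lambda>ys. st (tl ys)) (hd ys) (tl ys))"
    by (rule rc_prim[OF s0 g])
  have "rc k (\<lambda>xs. PR s0 (\<lambda>ys. st (tl ys)) (n xs) xs)"
    using rc_cons[OF p n] by simp
  moreover have "PR s0 (\<lambda>ys. st (tl ys)) m xs = ((\<lambda>s. st (s # xs)) ^^ m) (s0 xs)" for m xs
    by (induction m) auto
  ultimately show ?thesis by simp
qed

lemma rc_mn: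
  assumes f: "rc (Suc k) f" and ex: "\<And>xs. length xs = k \<Longrightarrow> \<exists>y. f (y # xs) = 0"
  shows "rc k (\<lambda>xs. LEAST y. f (y # xs) = 0)"
proof -
  obtain cf where cf: "\<forall>xs. length xs = Suc k \<longrightarrow> eval {} cf xs (f xs)" using f unfolding rc_def by blast
  show ?thesis unfolding rc_def
  proof (intro exI allI impI)
    fix xs :: "nat list" assume l: "length xs = k"
    let ?y = "LEAST y. f (y # xs) = 0"
    obtain y0 where "f (y0 # xs) = 0" using ex[OF l] by blast
    then have y: "f (?y # xs) = 0" by (rule LeastI)
    show "eval {} (Mn cf) xs ?y"
    proof (rule ev_mn)
      have e: "eval {} cf (z # xs) (f (z # xs))" for z using cf l by simp
      show "eval {} cf (?y # xs) 0" using e[of ?y] y by simp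
      show "\<forall>z<?y. \<exists>w. eval {} cf (z # xs) w \<and> w \<noteq> 0"
      proof (intro allI impI)
        fix z assume "z < ?y"
        then have "f (z # xs) \<noteq> 0" by (rule not_less_Least)
        then show "\<exists>w. eval {} cf (z # xs) w \<and> w \<noteq> 0" using e by blast
      qed
    qed
  qed
qed

lemma rc_cong': "rc k f \<Longrightarrow> k = k' \<Longrightarrow> (\<And>xs. length xs = k' \<Longrightarrow> f xs = g xs) \<Longrightarrow> rc k' g"
  using rc_cong by blast

lemma len1: "length ys = Suc 0 \<Longrightarrow> ys = [hd ys]"
  by (cases ys) auto
lemma len2: "length ys = Suc (Suc 0) \<Longrightarrow> ys = [ys ! 0, ys ! 1]"
  by (cases ys; cases "tl ys") auto
lemma len3: "length ys = Suc (Suc (Suc 0)) \<Longrightarrow> ys = [ys ! 0, ys ! 1, ys ! 2]"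
  by (cases ys; cases "tl ys"; cases "tl (tl ys)") auto

lemma rc_prim': "rc k f \<Longrightarrow> rc k2 g \<Longrightarrow> k2 = Suc (Suc k) \<Longrightarrow> k1 = Suc k \<Longrightarrow> rc k1 (\<lambda>ys. PR f g (hd ys) (tl ys))"
  using rc_prim by blast

lemma rc_add0: "rc 2 (\<lambda>ys. ys ! 0 + ys ! 1)"
proof -
  have f: "rc 1 (\<lambda>xs. xs ! 0)" by (rule rc_proj) simp
  have p1: "rc 3 (\<lambda>ys. ys ! 1)" by (rule rc_proj) simp
  have p: "rc 2 (\<lambda>ys. PR (\<lambda>xs. xs ! 0) (\<lambda>ys. Suc (ys ! 1)) (hd ys) (tl ys))"
    by (rule rc_prim'[OF f rc_suc[OF p1]]) simp_all
  have e: "PR (\<lambda>xs. xs ! 0) (\<lambda>ys. Suc (ys ! 1)) n [m] = n + m" for n m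
    by (induction n) auto
  show ?thesis
  proof (rule rc_cong[OF p])
    fix ys :: "nat list" assume l: "length ys = 2"
    then have "ys = [ys ! 0, ys ! 1]" using len2 numeral_2_eq_2 by simp
    then show "PR (\<lambda>xs. xs ! 0) (\<lambda>ys. Suc (ys ! 1)) (hd ys) (tl ys) = ys ! 0 + ys ! 1"
      by (metis e list.sel(1) list.sel(3))
  qed
qed

lemma rc_add: "rc k a \<Longrightarrow> rc k b \<Longrightarrow> rc k (\<lambda>xs. a xs + b xs)"
  using rc_comp2[OF rc_add0] by simp

lemma rc_pred0: "rc 1 (\<lambda>ys. hd ys - 1)"
proof -
  have g: "rc 2 (\<lambda>ys. ys ! 0)" by (rule rc_proj) simp
  have pr: "rc 1 (\<lambda>ys. PR (\<lambda>_. 0) (\<lambda>ys. ys ! 0) (hd ys) (tl ys))"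
    by (rule rc_prim'[OF rc_zero g]) simp_all
  have e1: "PR (\<lambda>_. 0) (\<lambda>ys. ys ! 0) n [] = n - 1" for n
    by (cases n) auto
  show ?thesis
  proof (rule rc_cong[OF pr])
    fix ys :: "nat list" assume l: "length ys = 1"
    then have "ys = [hd ys]" using len1 by simp
    then show "PR (\<lambda>_. 0) (\<lambda>ys. ys ! 0) (hd ys) (tl ys) = hd ys - 1"
      by (metis e1 list.sel(3))
  qed
qed

lemma rc_sub0: "rc 2 (\<lambda>ys. ys ! 1 - ys ! 0)"
proof -
  have f: "rc 1 (\<lambda>xs. xs ! 0)" by (rule rc_proj) simp
  have p1: "rc 3 (\<lambda>ys. ys ! 1)" by (rule rc_proj) simp
  have g: "rc 3 (\<lambda>ys. ys ! 1 - 1)"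
    using rc_comp1[OF rc_pred0 p1] by simp
  have p: "rc 2 (\<lambda>ys. PR (\<lambda>xs. xs ! 0) (\<lambda>ys. ys ! 1 - 1) (hd ys) (tl ys))"
    by (rule rc_prim'[OF f g]) simp_all
  have e: "PR (\<lambda>xs. xs ! 0) (\<lambda>ys. ys ! 1 - 1) n [m] = m - n" for n m
    by (induction n) auto
  show ?thesis
  proof (rule rc_cong[OF p])
    fix ys :: "nat list" assume l: "length ys = 2"
    then have "ys = [ys ! 0, ys ! 1]" using len2 numeral_2_eq_2 by simp
    then show "PR (\<lambda>xs. xs ! 0) (\<lambda>ys. ys ! 1 - 1) (hd ys) (tl ys) = ys ! 1 - ys ! 0"
      by (metis e list.sel(1) list.sel(3))
  qed
qed

lemma rc_sub: "rc k a \<Longrightarrow> rc k b \<Longrightarrow> rc k (\<lambda>xs. a xs - b xs)"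
  using rc_comp2[OF rc_sub0, of k b a] by simp

lemma rc_tri0: "rc 1 (\<lambda>ys. triangle (hd ys))"
proof -
  have p0: "rc 2 (\<lambda>ys. ys ! 0)" by (rule rc_proj) simp
  have p1: "rc 2 (\<lambda>ys. ys ! 1)" by (rule rc_proj) simp
  have g: "rc 2 (\<lambda>ys. ys ! 1 + Suc (ys ! 0))"
    by (rule rc_add[OF p1 rc_suc[OF p0]])
  have p: "rc 1 (\<lambda>ys. PR (\<lambda>_. 0) (\<lambda>ys. ys ! 1 + Suc (ys ! 0)) (hd ys) (tl ys))"
    by (rule rc_prim'[OF rc_zero g]) simp_all
  have e: "PR (\<lambda>_. 0) (\<lambda>ys. ys ! 1 + Suc (ys ! 0)) n [] = triangle n" for n
    by (induction n) auto
  show ?thesis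
  proof (rule rc_cong[OF p])
    fix ys :: "nat list" assume l: "length ys = 1"
    then have "ys = [hd ys]" using len1 by simp
    then show "PR (\<lambda>_. 0) (\<lambda>ys. ys ! 1 + Suc (ys ! 0)) (hd ys) (tl ys) = triangle (hd ys)"
      by (metis e list.sel(3))
  qed
qed

lemma rc_tri: "rc k a \<Longrightarrow> rc k (\<lambda>xs. triangle (a xs))"
  using rc_comp1[OF rc_tri0] by simp

lemma rc_cond0: "rc 3 (\<lambda>ys. if ys ! 0 = 0 then ys ! 1 else ys ! 2)"
proof -
  have f: "rc 2 (\<lambda>xs. xs ! 0)" by (rule rc_proj) simp
  have g: "rc 4 (\<lambda>xs. xs ! 3)" by (rule rc_proj) simp
  have p: "rc 3 (\<lambda>ys. PR (\<lambda>xs. xs ! 0) (\<lambda>ys. ys ! 3) (hd ys) (tl ys))"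
    by (rule rc_prim'[OF f g]) simp_all
  have e: "PR (\<lambda>xs. xs ! 0) (\<lambda>ys. ys ! 3) n [a, b] = (if n = 0 then a else b)" for n a b
    by (cases n) (auto simp: numeral_3_eq_3)
  show ?thesis
  proof (rule rc_cong[OF p])
    fix ys :: "nat list" assume "length ys = 3"
    then have "ys = [ys ! 0, ys ! 1, ys ! 2]" using len3 numeral_3_eq_3 by simp
    then show "PR (\<lambda>xs. xs ! 0) (\<lambda>ys. ys ! 3) (hd ys) (tl ys) = (if ys ! 0 = 0 then ys ! 1 else ys ! 2)"
      by (metis e list.sel(1) list.sel(3))
  qed
qed

lemma rc_cond: "rc k c \<Longrightarrow> rc k a \<Longrightarrow> rc k b \<Longrightarrow> rc k (\<lambda>xs. if c xs = 0 then a xs else b xs)"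
proof -
  assume "rc k c" "rc k a" "rc k b"
  from rc_comp3[OF rc_cond0 this] show ?thesis
    by (rule rc_cong) (simp add: numeral_2_eq_2)
qed

definition dsum :: "nat \<Rightarrow> nat" where
  "dsum w = (LEAST s. Suc w - triangle (Suc s) = 0)"

lemma tri_ge: "n \<le> triangle n"
  by (induction n) auto

lemma rc_dsum0: "rc 1 (\<lambda>ys. dsum (hd ys))"
proof -
  have p0: "rc (Suc 1) (\<lambda>ys. ys ! 0)" by (rule rc_proj) simp
  have p1: "rc (Suc 1) (\<lambda>ys. ys ! 1)" by (rule rc_proj) simp
  have f: "rc (Suc 1) (\<lambda>ys. Suc (ys ! 1) - triangle (Suc (ys ! 0)))"
    by (rule rc_sub[OF rc_suc[OF p1] rc_tri[OF rc_suc[OF p0]]])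
  have ex: "\<exists>y. Suc (((y # xs) ! 1)) - triangle (Suc ((y # xs) ! 0)) = 0" if "length xs = 1" for xs
  proof -
    have "xs = [hd xs]" using that len1 by simp
    then obtain a where a: "xs = [a]" by blast
    have "Suc a \<le> triangle (Suc a)" using tri_ge by blast
    then have "Suc (((a # xs) ! 1)) - triangle (Suc ((a # xs) ! 0)) = 0" using a by simp
    then show ?thesis by (rule exI)
  qed
  have "rc 1 (\<lambda>xs. LEAST y. Suc ((y # xs) ! 1) - triangle (Suc ((y # xs) ! 0)) = 0)"
    by (rule rc_mn[OF f ex])
  then show ?thesis
  proof (rule rc_cong)
    fix xs :: "nat list" assume "length xs = 1"
    then have "xs = [hd xs]" using len1 by simp
    then obtain a where a: "xs = [a]" by blast
    show "(LEAST y. Suc ((y # xs) ! 1) - triangle (Suc ((y # xs) ! 0)) = 0) = dsum (hd xs)"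
      unfolding dsum_def a by (simp only: nth_Cons_0 nth_Cons_Suc One_nat_def list.sel(1))
  qed
qed

lemma rc_dsum: "rc k a \<Longrightarrow> rc k (\<lambda>xs. dsum (a xs))"
  using rc_comp1[OF rc_dsum0] by simp

lemma triangle_mono: "m \<le> n \<Longrightarrow> triangle m \<le> triangle n"
  by (induction n) (auto simp: le_Suc_eq)

lemma dsum_enc: "dsum (prod_encode (a, b)) = a + b"
  unfolding dsum_def prod_encode_def
proof (simp only: case_prod_conv, rule Least_equality)
  show "Suc (triangle (a + b) + a) - triangle (Suc (a + b)) = 0" by simp
  fix y assume y: "Suc (triangle (a + b) + a) - triangle (Suc y) = 0"
  show "a + b \<le> y"
  proof (rule ccontr)
    assume "\<not> a + b \<le> y"
    then have "Suc y \<le> a + b" by simp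
    then have "triangle (Suc y) \<le> triangle (a + b)" by (rule triangle_mono)
    then show False using y by simp
  qed
qed

lemma dec_facts: "fst (prod_decode w) = w - triangle (dsum w) \<and> snd (prod_decode w) = dsum w - fst (prod_decode w)"
proof -
  obtain a b where ab: "prod_decode w = (a, b)" by (cases "prod_decode w")
  have w: "w = prod_encode (a, b)" using prod_decode_inverse[of w] ab by simp
  have d: "dsum w = a + b" using w dsum_enc by simp
  show ?thesis using ab d w by (simp add: prod_encode_def)
qed

lemma fst_dec: "fst (prod_decode w) = w - triangle (dsum w)"
  using dec_facts by blast

lemma snd_dec: "snd (prod_decode w) = dsum w - fst (prod_decode w)"
  using dec_facts by blast

lemma rc_fst: "rc k a \<Longrightarrow> rc k (\<lambda>xs. fst (prod_decode (a xs)))"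
  unfolding fst_dec by (intro rc_sub[OF _ rc_tri[OF rc_dsum]])

lemma rc_snd: "rc k a \<Longrightarrow> rc k (\<lambda>xs. snd (prod_decode (a xs)))"
  unfolding snd_dec by (intro rc_sub[OF rc_dsum rc_fst])

lemma rc_enc: "rc k a \<Longrightarrow> rc k b \<Longrightarrow> rc k (\<lambda>xs. prod_encode (a xs, b xs))"
  unfolding prod_encode_def by (simp, intro rc_add[OF rc_tri[OF rc_add]])

definition stp :: "(nat \<Rightarrow> nat \<Rightarrow> nat) \<Rightarrow> nat \<Rightarrow> nat \<Rightarrow> nat" where
  "stp F z s = (if fst (prod_decode s) = 0 then s else
     prod_encode (snd (prod_decode (fst (prod_decode s) - 1)),
       Suc (prod_encode (F z (fst (prod_decode (fst (prod_decode s) - 1))), snd (prod_decode s)))))"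

lemma stp_nil: "stp F z (prod_encode (0, a)) = prod_encode (0, a)"
  unfolding stp_def by simp

lemma stp_cons: "stp F z (prod_encode (list_encode (x # xs), a)) =
    prod_encode (list_encode xs, Suc (prod_encode (F z x, a)))"
  unfolding stp_def by simp

lemma funpow_fix: "f s = s \<Longrightarrow> (f ^^ n) s = s"
  by (induction n) auto

lemma stp_iter: "length xs \<le> n \<Longrightarrow>
  (stp F z ^^ n) (prod_encode (list_encode xs, list_encode acc)) =
   prod_encode (0, list_encode (rev (map (F z) xs) @ acc))"
proof (induction xs arbitrary: n acc)
  case Nil
  then show ?case by (simp add: funpow_fix stp_nil)
next
  case (Cons x xs)
  then obtain m where n: "n = Suc m" and m: "length xs \<le> m" by (cases n) auto
  have "(stp F z ^^ n) (prod_encode (list_encode (x # xs), list_encode acc)) =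
        (stp F z ^^ m) (stp F z (prod_encode (list_encode (x # xs), list_encode acc)))"
    unfolding n funpow_Suc_right by simp
  also have "\<dots> = (stp F z ^^ m) (prod_encode (list_encode xs, list_encode (F z x # acc)))"
    using stp_cons[of F z x xs "list_encode acc"] by simp
  also have "\<dots> = prod_encode (0, list_encode (rev (map (F z) xs) @ (F z x # acc)))"
    using Cons.IH[OF m] .
  finally show ?case by simp
qed

definition RM :: "(nat \<Rightarrow> nat \<Rightarrow> nat) \<Rightarrow> nat \<Rightarrow> nat \<Rightarrow> nat" where
  "RM F z w = snd (prod_decode ((stp F z ^^ z) (prod_encode (w, 0))))"

lemma RM_correct: "length xs \<le> z \<Longrightarrow> RM F z (list_encode xs) = list_encode (rev (map (F z) xs))"
  unfolding RM_def using stp_iter[of xs z F z "[]"] by simp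

lemma len_le: "length xs \<le> list_encode xs"
proof (induction xs)
  case (Cons x xs)
  have "list_encode xs \<le> prod_encode (x, list_encode xs)" by (rule le_prod_encode_2)
  then show ?case using Cons by simp
qed simp

lemma elem_le: "x \<in> set xs \<Longrightarrow> x \<le> list_encode xs"
proof (induction xs)
  case (Cons y xs)
  have "y \<le> prod_encode (y, list_encode xs)" by (rule le_prod_encode_1)
  moreover have "list_encode xs \<le> prod_encode (y, list_encode xs)" by (rule le_prod_encode_2)
  ultimately show ?case using Cons by auto
qed simp

definition hh :: "nat \<Rightarrow> nat" where
  "hh z = RM (\<lambda>z x. x) z (RM (\<lambda>z x. prod_encode (z, x)) z z)"

lemma hh_correct: "hh (list_encode xs) = list_encode (map (\<lambda>x. prod_encode (list_encode xs, x)) xs)"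
proof -
  let ?z = "list_encode xs"
  have l: "length xs \<le> ?z" by (rule len_le)
  have 1: "RM (\<lambda>z x. prod_encode (z, x)) ?z ?z = list_encode (rev (map (\<lambda>x. prod_encode (?z, x)) xs))"
    using RM_correct[OF l] by simp
  have l2: "length (rev (map (\<lambda>x. prod_encode (?z, x)) xs)) \<le> ?z" using l by simp
  show ?thesis unfolding hh_def 1 using RM_correct[OF l2, of "\<lambda>z x. x"] by simp
qed

lemma rc_stp:
  assumes FF: "\<And>k a b. rc k a \<Longrightarrow> rc k b \<Longrightarrow> rc k (\<lambda>xs. F (a xs) (b xs))"
  shows "rc 2 (\<lambda>ys. stp F (ys ! 1) (ys ! 0))"
proof -
  have s: "rc 2 (\<lambda>ys. ys ! 0)" by (rule rc_proj) simp
  have z: "rc 2 (\<lambda>ys. ys ! 1)" by (rule rc_proj) simp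
  have r: "rc 2 (\<lambda>ys. fst (prod_decode (ys ! 0)))" by (rule rc_fst[OF s])
  have r1: "rc 2 (\<lambda>ys. fst (prod_decode (ys ! 0)) - 1)" by (rule rc_sub[OF r rc_const])
  have A: "rc 2 (\<lambda>ys. snd (prod_decode (fst (prod_decode (ys ! 0)) - 1)))" by (rule rc_snd[OF r1])
  have x: "rc 2 (\<lambda>ys. fst (prod_decode (fst (prod_decode (ys ! 0)) - 1)))" by (rule rc_fst[OF r1])
  have acc: "rc 2 (\<lambda>ys. snd (prod_decode (ys ! 0)))" by (rule rc_snd[OF s])
  have B: "rc 2 (\<lambda>ys. Suc (prod_encode (F (ys ! 1) (fst (prod_decode (fst (prod_decode (ys ! 0)) - 1))),
             snd (prod_decode (ys ! 0)))))"
    by (rule rc_suc[OF rc_enc[OF FF[OF z x] acc]])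
  have "rc 2 (\<lambda>ys. if fst (prod_decode (ys ! 0)) = 0 then ys ! 0 else
      prod_encode (snd (prod_decode (fst (prod_decode (ys ! 0)) - 1)),
        Suc (prod_encode (F (ys ! 1) (fst (prod_decode (fst (prod_decode (ys ! 0)) - 1))),
             snd (prod_decode (ys ! 0))))))"
    by (rule rc_cond[OF r s rc_enc[OF A B]])
  then show ?thesis unfolding stp_def .
qed

lemma rc_RM:
  assumes FF: "\<And>k a b. rc k a \<Longrightarrow> rc k b \<Longrightarrow> rc k (\<lambda>xs. F (a xs) (b xs))"
    and w: "rc 1 w"
  shows "rc 1 (\<lambda>xs. RM F (xs ! 0) (w xs))"
proof -
  have st0: "rc 2 (\<lambda>ys. stp F (ys ! 1) (ys ! 0))" by (rule rc_stp[of F, OF FF])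
  have st: "rc (Suc 1) (\<lambda>ys. stp F (ys ! Suc 0) (ys ! 0))" using st0 by (simp add: numeral_2_eq_2)
  have n: "rc 1 (\<lambda>xs. xs ! 0)" by (rule rc_proj) simp
  have s0: "rc 1 (\<lambda>xs. prod_encode (w xs, 0))" by (rule rc_enc[OF w rc_const])
  have it: "rc 1 (\<lambda>xs. ((\<lambda>s. stp F ((s # xs) ! Suc 0) ((s # xs) ! 0)) ^^ (xs ! 0)) (prod_encode (w xs, 0)))"
    using rc_iter[OF st n s0] .
  have e: "(\<lambda>s. stp F ((s # xs) ! Suc 0) ((s # xs) ! 0)) = stp F (xs ! 0)" for xs :: "nat list"
    by (rule ext) (simp only: nth_Cons_Suc nth_Cons_0)
  have "rc 1 (\<lambda>xs. (stp F (xs ! 0) ^^ (xs ! 0)) (prod_encode (w xs, 0)))"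
    using it unfolding e .
  from rc_snd[OF this] show ?thesis unfolding RM_def .
qed

lemma computable_hh: "computable hh"
proof -
  have F1: "rc k (\<lambda>xs. prod_encode (a xs, b xs))" if "rc k a" "rc k b" for k a b
    using rc_enc[OF that] .
  have F2: "rc k (\<lambda>xs. b xs)" if "rc k a" "rc k b" for k :: nat and a b :: "nat list \<Rightarrow> nat"
    using that(2) .
  have p: "rc 1 (\<lambda>xs. xs ! 0)" by (rule rc_proj) simp
  have i: "rc 1 (\<lambda>xs. RM (\<lambda>z x. prod_encode (z, x)) (xs ! 0) (xs ! 0))"
    by (rule rc_RM[of "\<lambda>z x. prod_encode (z, x)" "\<lambda>xs. xs ! 0", OF F1 p])
  have "rc 1 (\<lambda>xs. RM (\<lambda>z x. x) (xs ! 0) (RM (\<lambda>z x. prod_encode (z, x)) (xs ! 0) (xs ! 0)))"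
    by (rule rc_RM[of "\<lambda>z x. x", OF F2 i])
  then have "rc 1 (\<lambda>xs. hh (xs ! 0))" unfolding hh_def .
  then obtain c where c: "\<forall>xs. length xs = 1 \<longrightarrow> eval {} c xs (hh (xs ! 0))" unfolding rc_def by blast
  have "eval {} c [x] (hh x)" for x using c[rule_format, of "[x]"] by simp
  then show ?thesis unfolding computable_def computable_in_def by blast
qed

definition gf :: "nat set \<Rightarrow> nat \<Rightarrow> nat \<Rightarrow> nat" where
  "gf D m = (\<lambda>x. SOME y. eval D (from_nat m) [x] y)"

lemma gf_comp: "computable_in D g \<Longrightarrow> \<exists>m. gf D m = g"
proof -
  assume "computable_in D g"
  then obtain c where c: "\<forall>x. eval D c [x] (g x)" unfolding computable_in_def by blast
  have "gf D (to_nat c) = g"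
  proof (rule ext)
    fix x
    show "gf D (to_nat c) x = g x"
      unfolding gf_def from_nat_to_nat
    proof (rule some_equality)
      show "eval D c [x] (g x)" using c by blast
      fix y assume "eval D c [x] y"
      then show "y = g x" using c eval_det by blast
    qed
  qed
  then show ?thesis by blast
qed

definition prot :: "nat \<Rightarrow> nat \<Rightarrow> bool" where
  "prot a b \<longleftrightarrow> fst (prod_decode a) = fst (prod_decode b) \<and> snd (prod_decode a) \<le> fst (prod_decode a)
      \<and> snd (prod_decode b) \<le> fst (prod_decode b)"

lemma prot_finite: "finite {b. prot a b}"
proof -
  let ?z = "fst (prod_decode a)"
  have "{b. prot a b} \<subseteq> prod_encode ` ({?z} \<times> {..?z})"
  proof
    fix b assume "b \<in> {b. prot a b}"
    then have p: "prot a b" by simp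
    have "b = prod_encode (fst (prod_decode b), snd (prod_decode b))"
      using prod_decode_inverse[of b] by simp
    moreover have "(fst (prod_decode b), snd (prod_decode b)) \<in> {?z} \<times> {..?z}"
      using p unfolding prot_def by (simp add: mem_Times_iff)
    ultimately show "b \<in> prod_encode ` ({?z} \<times> {..?z})" by blast
  qed
  then show ?thesis by (rule finite_subset) simp
qed

definition UL :: "(nat \<times> nat) list \<Rightarrow> nat set" where
  "UL L = fst ` set L \<union> snd ` set L"

definition good :: "(nat \<Rightarrow> nat) \<Rightarrow> (nat \<times> nat) list \<Rightarrow> nat \<times> nat \<Rightarrow> bool" where
  "good g L p \<longleftrightarrow> fst p \<in> range g \<and> snd p \<in> range g \<and> fst p \<noteq> snd p \<and> \<not> prot (fst p) (snd p)
     \<and> fst p \<notin> UL L \<and> snd p \<notin> UL L"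

lemma good_ex: "inj g \<Longrightarrow> \<exists>p. good g L p"
proof -
  assume "inj g"
  then have inf: "infinite (range g)" using range_inj_infinite by blast
  have fU: "finite (UL L)" unfolding UL_def by simp
  have "infinite (range g - UL L)" by (rule Diff_infinite_finite[OF fU inf])
  then obtain a where a: "a \<in> range g" "a \<notin> UL L" by (metis Diff_iff infinite_imp_nonempty ex_in_conv)
  have f2: "finite (UL L \<union> {a} \<union> {b. prot a b})" using fU prot_finite by simp
  have "infinite (range g - (UL L \<union> {a} \<union> {b. prot a b}))" by (rule Diff_infinite_finite[OF f2 inf])
  then obtain b where b: "b \<in> range g" "b \<notin> UL L \<union> {a} \<union> {b. prot a b}"
    by (metis Diff_iff infinite_imp_nonempty ex_in_conv)
  have "good g L (a, b)" unfolding good_def using a b by auto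
  then show ?thesis by blast
qed

fun PL :: "nat set \<Rightarrow> nat \<Rightarrow> (nat \<times> nat) list" where
  "PL D 0 = []"
| "PL D (Suc m) = (if inj (gf D m) then PL D m @ [SOME p. good (gf D m) (PL D m) p] else PL D m)"

definition Inv :: "(nat \<times> nat) set \<Rightarrow> bool" where
  "Inv S \<longleftrightarrow> (\<forall>p\<in>S. fst p \<noteq> snd p \<and> \<not> prot (fst p) (snd p)) \<and>
     (\<forall>p\<in>S. \<forall>q\<in>S. (fst p = fst q \<or> fst p = snd q \<or> snd p = fst q \<or> snd p = snd q) \<longrightarrow> p = q)"

lemma Inv_PL: "Inv (set (PL D m))"
proof (induction m)
  case 0
  then show ?case by (simp add: Inv_def)
next
  case (Suc m)
  show ?case
  proof (cases "inj (gf D m)")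
    case True
    let ?L = "PL D m"
    let ?p = "SOME p. good (gf D m) ?L p"
    have g: "good (gf D m) ?L ?p" using good_ex[OF True] by (rule someI_ex)
    have n: "fst ?p \<notin> UL ?L" "snd ?p \<notin> UL ?L" using g unfolding good_def by auto
    have "set (PL D (Suc m)) = insert ?p (set ?L)" using True by simp
    moreover have "Inv (insert ?p (set ?L))"
      using Suc g n unfolding Inv_def good_def UL_def by (auto simp: image_iff)
    ultimately show ?thesis by simp
  next
    case False
    then show ?thesis using Suc by simp
  qed
qed

lemma PL_mono: "m \<le> n \<Longrightarrow> set (PL D m) \<subseteq> set (PL D n)"
proof -
  assume "m \<le> n"
  have "set (PL D k) \<subseteq> set (PL D (Suc k))" for k by auto
  then show ?thesis using lift_Suc_mono_le[of "\<lambda>k. set (PL D k)"] \<open>m \<le> n\<close> by blast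
qed

definition SS :: "nat set \<Rightarrow> (nat \<times> nat) set" where
  "SS D = (\<Union>m. set (PL D m))"

lemma Inv_SS: "Inv (SS D)"
  unfolding Inv_def
proof (rule conjI)
  show "\<forall>p\<in>SS D. fst p \<noteq> snd p \<and> \<not> prot (fst p) (snd p)"
  proof
    fix p assume "p \<in> SS D"
    then obtain m where pm: "p \<in> set (PL D m)" unfolding SS_def by blast
    have "\<forall>p\<in>set (PL D m). fst p \<noteq> snd p \<and> \<not> prot (fst p) (snd p)"
      using Inv_PL[of D m] unfolding Inv_def by (elim conjE)
    then show "fst p \<noteq> snd p \<and> \<not> prot (fst p) (snd p)" using pm by blast
  qed
next
  show "\<forall>p\<in>SS D. \<forall>q\<in>SS D. (fst p = fst q \<or> fst p = snd q \<or> snd p = fst q \<or> snd p = snd q) \<longrightarrow> p = q"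
  proof (intro ballI impI)
    fix p q assume p: "p \<in> SS D" and q: "q \<in> SS D"
      and c: "fst p = fst q \<or> fst p = snd q \<or> snd p = fst q \<or> snd p = snd q"
    obtain m1 where m1: "p \<in> set (PL D m1)" using p unfolding SS_def by blast
    obtain m2 where m2: "q \<in> set (PL D m2)" using q unfolding SS_def by blast
    have pM: "p \<in> set (PL D (max m1 m2))" using m1 PL_mono[of m1 "max m1 m2" D] by auto
    have qM: "q \<in> set (PL D (max m1 m2))" using m2 PL_mono[of m2 "max m1 m2" D] by auto
    have I2: "\<forall>p\<in>set (PL D (max m1 m2)). \<forall>q\<in>set (PL D (max m1 m2)).
       (fst p = fst q \<or> fst p = snd q \<or> snd p = fst q \<or> snd p = snd q) \<longrightarrow> p = q"
      using Inv_PL[of D "max m1 m2"] unfolding Inv_def by (elim conjE)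
    show "p = q" by (rule I2[rule_format, OF pM qM c])
  qed
qed

definition FF :: "nat set \<Rightarrow> (nat \<times> nat) set" where
  "FF D = {(x, y). x = y \<or> (x, y) \<in> SS D \<or> (y, x) \<in> SS D}"

lemma equiv_FF: "equiv UNIV (FF D)"
proof -
  have I: "Inv (SS D)" by (rule Inv_SS)
  have "trans (FF D)"
  proof (rule transI)
    fix x y z assume xy: "(x, y) \<in> FF D" and yz: "(y, z) \<in> FF D"
    show "(x, z) \<in> FF D"
    proof (cases "x = y \<or> y = z")
      case True
      then show ?thesis using xy yz by auto
    next
      case False
      from xy False obtain p where p: "p \<in> SS D" "p = (x, y) \<or> p = (y, x)" unfolding FF_def by auto
      from yz False obtain q where q: "q \<in> SS D" "q = (y, z) \<or> q = (z, y)" unfolding FF_def by auto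
      have sh: "fst p = fst q \<or> fst p = snd q \<or> snd p = fst q \<or> snd p = snd q" using p(2) q(2) by auto
      have I2: "\<forall>p\<in>SS D. \<forall>q\<in>SS D.
         (fst p = fst q \<or> fst p = snd q \<or> snd p = fst q \<or> snd p = snd q) \<longrightarrow> p = q"
        using I unfolding Inv_def by (elim conjE)
      have "p = q" by (rule I2[rule_format, OF p(1) q(1) sh])
      then show ?thesis using p q False unfolding FF_def by auto
    qed
  qed
  moreover have "refl_on UNIV (FF D)" unfolding refl_on_def FF_def by auto
  moreover have "sym (FF D)" unfolding sym_def FF_def by auto
  ultimately show ?thesis unfolding equiv_def by simp
qed

lemma equiv_Id': "equiv UNIV (Id :: (nat \<times> nat) set)"
  unfolding equiv_def refl_on_def sym_def trans_def by auto

lemma FF_prot: "(a, b) \<in> FF D \<Longrightarrow> prot a b \<Longrightarrow> a = b"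
proof -
  assume ab: "(a, b) \<in> FF D" and pr: "prot a b"
  have I: "Inv (SS D)" by (rule Inv_SS)
  have prs: "prot b a" using pr unfolding prot_def by auto
  show "a = b"
  proof (rule ccontr)
    assume "a \<noteq> b"
    then have "(a, b) \<in> SS D \<or> (b, a) \<in> SS D" using ab unfolding FF_def by auto
    then show False using I pr prs unfolding Inv_def by fastforce
  qed
qed

lemma fin_red: "finitarily_reducible Id (FF D)"
  unfolding finitarily_reducible_def
proof (intro exI conjI allI impI)
  show "computable hh" by (rule computable_hh)
  fix xs :: "nat list" assume "xs \<noteq> []"
  let ?z = "list_encode xs"
  let ?ys = "map (\<lambda>x. prod_encode (?z, x)) xs"
  have d: "list_decode (hh ?z) = ?ys" by (simp add: hh_correct)
  show "let ys = list_decode (hh (list_encode xs)) in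
          length ys = length xs \<and>
          (\<forall>i j. i < j \<and> j < length xs \<longrightarrow> ((xs ! i, xs ! j) \<in> Id) = ((ys ! i, ys ! j) \<in> FF D))"
    unfolding d Let_def
  proof (intro conjI allI impI)
    show "length ?ys = length xs" by simp
    fix i j assume ij: "i < j \<and> j < length xs"
    then have i: "i < length xs" and j: "j < length xs" by auto
    have yi: "?ys ! i = prod_encode (?z, xs ! i)" using i by simp
    have yj: "?ys ! j = prod_encode (?z, xs ! j)" using j by simp
    have le1: "xs ! i \<le> ?z" using i by (intro elem_le) simp
    have le2: "xs ! j \<le> ?z" using j by (intro elem_le) simp
    have pr: "prot (?ys ! i) (?ys ! j)" unfolding yi yj prot_def using le1 le2 by simp
    show "((xs ! i, xs ! j) \<in> Id) = ((?ys ! i, ?ys ! j) \<in> FF D)"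
    proof
      assume "(xs ! i, xs ! j) \<in> Id"
      then show "(?ys ! i, ?ys ! j) \<in> FF D" unfolding FF_def yi yj by simp
    next
      assume "(?ys ! i, ?ys ! j) \<in> FF D"
      then have "?ys ! i = ?ys ! j" using FF_prot pr by blast
      then show "(xs ! i, xs ! j) \<in> Id" unfolding yi yj by simp
    qed
  qed
qed

lemma no_red: "\<not> (\<exists>g. computable_in D g \<and> is_reduction Id (FF D) g)"
proof
  assume "\<exists>g. computable_in D g \<and> is_reduction Id (FF D) g"
  then obtain g where gc: "computable_in D g" and r: "is_reduction Id (FF D) g" by blast
  obtain m where m: "gf D m = g" using gf_comp[OF gc] by blast
  show False
  proof (cases "inj g")
    case False
    then obtain x y where xy: "x \<noteq> y" "g x = g y" unfolding inj_def by blast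
    have "(x, y) \<in> Id \<longleftrightarrow> (g x, g y) \<in> FF D" using r unfolding is_reduction_def by blast
    moreover have "(g x, g y) \<in> FF D" using xy unfolding FF_def by simp
    ultimately show False using xy by simp
  next
    case True
    let ?p = "SOME p. good g (PL D m) p"
    have gd: "good g (PL D m) ?p" using good_ex[OF True] by (rule someI_ex)
    have "inj (gf D m)" using True m by simp
    then have "?p \<in> set (PL D (Suc m))" using m by simp
    then have pS: "?p \<in> SS D" unfolding SS_def by blast
    obtain x where x: "fst ?p = g x" using gd unfolding good_def by auto
    obtain y where y: "snd ?p = g y" using gd unfolding good_def by auto
    obtain a b where pab: "?p = (a, b)" by (cases ?p)
    have "(a, b) \<in> SS D" using pS pab by simp
    moreover have "a = g x" "b = g y" using x y pab by simp_all
    ultimately have "(g x, g y) \<in> FF D" unfolding FF_def by simp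
    moreover have "(x, y) \<in> Id \<longleftrightarrow> (g x, g y) \<in> FF D" using r unfolding is_reduction_def by blast
    ultimately have "x = y" by simp
    then show False using gd x y unfolding good_def by simp
  qed
qed

theorem corollary3p8:
  fixes D :: "nat set"
  shows "\<exists>E F :: (nat \<times> nat) set.
           equiv UNIV E \<and> equiv UNIV F \<and>
           finitarily_reducible E F \<and>
           \<not> (\<exists>g. computable_in D g \<and> is_reduction E F g)"
proof -
  have "equiv UNIV (Id :: (nat \<times> nat) set) \<and> equiv UNIV (FF D) \<and> finitarily_reducible Id (FF D) \<and>
      \<not> (\<exists>g. computable_in D g \<and> is_reduction Id (FF D) g)"
    using equiv_Id' equiv_FF[of D] fin_red[of D] no_red[of D] by simp
  then show ?thesis by (rule exI[of _ Id, OF exI[of _ "FF D"]])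
qed

end
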